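(* Let $H = N \rtimes T$ be a finite group where $N$ is abelian and $T$ is flat. Then $\mathrm{MaxDim}(H) = \mathrm{MaxDim}_T(N) + \mathrm{MaxDim}(T)$, where $T$ acts on $N$ by conjugation.
   Context: All groups are finite. A subset $s$ of a group is irredundant if $\langle s \setminus \{h\}\rangle \neq \langle s \rangle$ for every $h \in s$; $m(G)$ is the maximal size of an irredundant generating set of $G$ and $i(G)$ the maximal size of an irredundant subset of $G$. $G$ is flat if $m(G) = i(G)$. A finite set $\{H_1,\dots,H_n\}$ of subgroups of $G$ is in general position if for every $1 \le j \le n$, $\bigcap_{i \neq j} H_i \supsetneq \bigcap_{i} H_i$. $\mathrm{MaxDim}(G)$ is the largest cardinality of a collection of maximal subgroups of $G$ in general position. If a group $B$ acts on $G$, $\mathrm{MaxDim}_B(G)$ is the largest cardinality of a collection of maximal $B$-invariant (proper) subgroups of $G$ that is in general position. *)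

theory Defs
  imports "HOL-Algebra.Algebra"
begin

definition irredundant :: "('a, 'b) monoid_scheme \<Rightarrow> 'a set \<Rightarrow> bool" where
  "irredundant G s \<longleftrightarrow> s \<subseteq> carrier G \<and>
     (\<forall>h\<in>s. generate G (s - {h}) \<noteq> generate G s)"

definition m_irr :: "('a, 'b) monoid_scheme \<Rightarrow> nat" where
  "m_irr G = Max {card s | s. irredundant G s \<and> generate G s = carrier G}"

definition i_irr :: "('a, 'b) monoid_scheme \<Rightarrow> nat" where
  "i_irr G = Max {card s | s. irredundant G s}"

definition flat :: "('a, 'b) monoid_scheme \<Rightarrow> bool" where
  "flat G \<longleftrightarrow> m_irr G = i_irr G"

definition maximal_subgroup :: "('a, 'b) monoid_scheme \<Rightarrow> 'a set \<Rightarrow> bool" where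
  "maximal_subgroup G M \<longleftrightarrow> subgroup M G \<and> M \<noteq> carrier G \<and>
     (\<forall>K. subgroup K G \<and> M \<subseteq> K \<longrightarrow> K = M \<or> K = carrier G)"

(* A finite collection of subgroups of G is in general position if removing any
   member strictly enlarges the intersection (empty intersection = carrier G). *)
definition general_position :: "('a, 'b) monoid_scheme \<Rightarrow> 'a set set \<Rightarrow> bool" where
  "general_position G \<H> \<longleftrightarrow> finite \<H> \<and>
     (\<forall>Hj\<in>\<H>. carrier G \<inter> \<Inter>(\<H> - {Hj}) \<supset> carrier G \<inter> \<Inter>\<H>)"

definition MaxDim :: "('a, 'b) monoid_scheme \<Rightarrow> nat" where
  "MaxDim G = Max {card \<M> | \<M>. (\<forall>M\<in>\<M>. maximal_subgroup G M) \<and> general_position G \<M>}"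

definition conj_invariant :: "('a, 'b) monoid_scheme \<Rightarrow> 'a set \<Rightarrow> 'a set \<Rightarrow> bool" where
  "conj_invariant H B K \<longleftrightarrow> (\<forall>t\<in>B. (\<lambda>k. t \<otimes>\<^bsub>H\<^esub> k \<otimes>\<^bsub>H\<^esub> inv\<^bsub>H\<^esub> t) ` K = K)"

definition maximal_inv_subgroup :: "('a, 'b) monoid_scheme \<Rightarrow> 'a set \<Rightarrow> 'a set \<Rightarrow> 'a set \<Rightarrow> bool" where
  "maximal_inv_subgroup H B N K \<longleftrightarrow>
     subgroup K (H\<lparr>carrier := N\<rparr>) \<and> K \<noteq> N \<and> conj_invariant H B K \<and>
     (\<forall>L. subgroup L (H\<lparr>carrier := N\<rparr>) \<and> conj_invariant H B L \<and> K \<subseteq> L \<longrightarrow> L = K \<or> L = N)"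

definition MaxDim_act :: "('a, 'b) monoid_scheme \<Rightarrow> 'a set \<Rightarrow> 'a set \<Rightarrow> nat" where
  "MaxDim_act H B N = Max {card \<M> | \<M>. (\<forall>K\<in>\<M>. maximal_inv_subgroup H B N K) \<and>
                                      general_position (H\<lparr>carrier := N\<rparr>) \<M>}"

end

theory Submission
  imports Defs
begin


lemma gp_intro:
  assumes "finite F" "\<And>Q. Q \<in> F \<Longrightarrow> \<exists>x\<in>carrier G. (\<forall>Y\<in>F-{Q}. x \<in> Y) \<and> x \<notin> Q"
  shows "general_position G F"
  unfolding general_position_def
proof (intro conjI ballI assms(1))
  fix Q assume Q: "Q \<in> F"
  then obtain x where x: "x\<in>carrier G" "\<forall>Y\<in>F-{Q}. x \<in> Y" "x \<notin> Q" using assms(2) by blast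
  have "carrier G \<inter> \<Inter> (F - {Q}) \<supseteq> carrier G \<inter> \<Inter> F" by blast
  moreover have "x \<in> carrier G \<inter> \<Inter> (F - {Q})" using x by blast
  moreover have "x \<notin> carrier G \<inter> \<Inter> F" using x Q by blast
  ultimately show "carrier G \<inter> \<Inter> (F - {Q}) \<supset> carrier G \<inter> \<Inter> F" by blast
qed

lemma gp_elim:
  assumes "general_position G F" "Q \<in> F"
  shows "\<exists>x\<in>carrier G. (\<forall>Y\<in>F-{Q}. x \<in> Y) \<and> x \<notin> Q"
proof -
  have "\<forall>Hj\<in>F. carrier G \<inter> \<Inter> (F - {Hj}) \<supset> carrier G \<inter> \<Inter> F"
    using assms(1) unfolding general_position_def by (rule conjunct2)
  then have "carrier G \<inter> \<Inter> (F - {Q}) \<supset> carrier G \<inter> \<Inter> F" using assms(2) by (rule bspec)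
  then obtain x where x: "x \<in> carrier G \<inter> \<Inter> (F - {Q})" "x \<notin> carrier G \<inter> \<Inter> F"
    using psubset_imp_ex_mem by (metis DiffE)
  have "x \<notin> Q"
  proof
    assume "x \<in> Q"
    then have "x \<in> \<Inter> F" using x(1) by auto
    then show False using x by simp
  qed
  then show ?thesis using x by auto
qed

lemma gp_finite: "general_position G F \<Longrightarrow> finite F"
  unfolding general_position_def by (rule conjunct1)

lemma fam_fin:
  assumes "finite A" "\<And>M. P M \<Longrightarrow> M \<subseteq> A"
  shows "finite {card M | M. P M}"
proof (rule finite_subset[of _ "{..card A}"])
  show "{card M | M. P M} \<subseteq> {..card A}"
  proof
    fix x assume "x \<in> {card M | M. P M}"
    then obtain M where "P M" "x = card M" by blast
    then have "M \<subseteq> A" using assms(2) by blast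
    then have "card M \<le> card A" by (rule card_mono[OF assms(1)])
    then show "x \<in> {..card A}" using \<open>x = card M\<close> by simp
  qed
qed simp

lemma fam_ge:
  assumes "finite A" "\<And>M. P M \<Longrightarrow> M \<subseteq> A" "P M"
  shows "card M \<le> Max {card M | M. P M}"
proof (rule Max_ge)
  show "finite {card M | M. P M}" by (rule fam_fin[OF assms(1,2)])
  show "card M \<in> {card M | M. P M}" using assms(3) by blast
qed

lemma fam_in:
  assumes "finite A" "\<And>M. P M \<Longrightarrow> M \<subseteq> A" "P M0"
  shows "\<exists>M. P M \<and> card M = Max {card M | M. P M}"
proof -
  have "Max {card M | M. P M} \<in> {card M | M. P M}"
  proof (rule Max_in)
    show "finite {card M | M. P M}" by (rule fam_fin[OF assms(1,2)])
    show "{card M | M. P M} \<noteq> {}" using assms(3) by blast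
  qed
  then show ?thesis by force
qed

context group begin

lemma maxsub_sub: "maximal_subgroup G M \<Longrightarrow> M \<subseteq> carrier G"
proof -
  assume "maximal_subgroup G M"
  then have "subgroup M G" unfolding maximal_subgroup_def by blast
  then show ?thesis by (rule subgroup.subset)
qed

lemma MaxDim_ge:
  assumes "finite (carrier G)" "\<forall>M\<in>\<M>. maximal_subgroup G M" "general_position G \<M>"
  shows "card \<M> \<le> MaxDim G"
  unfolding MaxDim_def
proof (rule fam_ge[where A = "Pow (carrier G)"])
  show "finite (Pow (carrier G))" using assms(1) by simp
  fix M assume "(\<forall>K\<in>M. maximal_subgroup G K) \<and> general_position G M"
  then show "M \<subseteq> Pow (carrier G)" using maxsub_sub by blast
qed (use assms in blast)

lemma MaxDim_obtain:
  assumes "finite (carrier G)"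
  obtains \<M> where "\<forall>M\<in>\<M>. maximal_subgroup G M" "general_position G \<M>" "card \<M> = MaxDim G"
proof -
  have "\<exists>\<M>. ((\<forall>M\<in>\<M>. maximal_subgroup G M) \<and> general_position G \<M>) \<and> card \<M> = MaxDim G"
    unfolding MaxDim_def
  proof (rule fam_in[where A = "Pow (carrier G)"])
    show "finite (Pow (carrier G))" using assms(1) by simp
    fix M assume "(\<forall>K\<in>M. maximal_subgroup G K) \<and> general_position G M"
    then show "M \<subseteq> Pow (carrier G)" using maxsub_sub by blast
  next
    show "(\<forall>K\<in>{}. maximal_subgroup G K) \<and> general_position G {}"
      unfolding general_position_def by simp
  qed
  then show ?thesis using that by blast
qed

lemma i_irr_ge:
  assumes "finite (carrier G)" "irredundant G s"
  shows "card s \<le> i_irr G"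
  unfolding i_irr_def
proof (rule fam_ge[where A = "carrier G"])
  show "finite (carrier G)" using assms(1) by simp
  fix M assume "irredundant G M"
  then show "M \<subseteq> carrier G" by (simp add: irredundant_def)
qed (use assms in blast)

lemma exists_maximal:
  assumes fin: "finite (carrier G)" and P: "subgroup P G" "P \<noteq> carrier G"
  shows "\<exists>M. maximal_subgroup G M \<and> P \<subseteq> M"
proof -
  define Q where "Q K \<longleftrightarrow> subgroup K G \<and> K \<noteq> carrier G \<and> P \<subseteq> K" for K
  have bound: "\<forall>y. Q y \<longrightarrow> card y < Suc (card (carrier G))"
  proof (intro allI impI)
    fix y assume "Q y"
    then have "y \<subseteq> carrier G" unfolding Q_def by (simp add: subgroup.subset)
    then have "card y \<le> card (carrier G)" by (rule card_mono[OF fin])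
    then show "card y < Suc (card (carrier G))" by simp
  qed
  have qp: "Q P" unfolding Q_def using P by simp
  obtain K where K: "Q K" "\<forall>y. Q y \<longrightarrow> card y \<le> card K"
    using ex_has_greatest_nat[OF qp bound] by meson
  have "maximal_subgroup G K"
    unfolding maximal_subgroup_def
  proof (intro conjI allI impI)
    fix L assume L: "subgroup L G \<and> K \<subseteq> L"
    show "L = K \<or> L = carrier G"
    proof (cases "L = carrier G")
      case False
      then have "Q L" using K L unfolding Q_def by blast
      then have "card L \<le> card K" using K by blast
      moreover have "finite L" using L fin finite_subset subgroup.subset by blast
      ultimately have "K = L" using L card_seteq by blast
      then show ?thesis by simp
    qed simp
  qed (use K in \<open>auto simp: Q_def\<close>)
  then show ?thesis using K unfolding Q_def by blast
qed

lemma exists_irr_gen: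
  assumes fin: "finite (carrier G)"
  shows "\<exists>s. irredundant G s \<and> generate G s = carrier G"
proof -
  define Q where "Q s \<longleftrightarrow> s \<subseteq> carrier G \<and> generate G s = carrier G" for s
  have "subgroup (generate G (carrier G)) G" by (rule generate_is_subgroup) simp
  then have "generate G (carrier G) \<subseteq> carrier G" by (rule subgroup.subset)
  moreover have "carrier G \<subseteq> generate G (carrier G)"
    by (rule subsetI, rule generate.incl)
  ultimately have "Q (carrier G)" unfolding Q_def by simp
  then obtain s where s0: "Q s" "\<forall>y. Q y \<longrightarrow> card s \<le> card y"
    using ex_has_least_nat[of Q "carrier G" card] by meson
  then have s: "s \<subseteq> carrier G" "generate G s = carrier G" unfolding Q_def by auto
  have fs: "finite s" using s fin finite_subset by blast
  have "irredundant G s"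
    unfolding irredundant_def
  proof (intro conjI ballI)
    fix h assume h: "h \<in> s"
    show "generate G (s - {h}) \<noteq> generate G s"
    proof
      assume "generate G (s - {h}) = generate G s"
      then have "Q (s - {h})" using s unfolding Q_def by auto
      then have "card s \<le> card (s - {h})" using s0 by blast
      then show False using card_Diff1_less[OF fs h] by linarith
    qed
  qed (use s in auto)
  then show ?thesis using s by blast
qed

lemma m_irr_le_MaxDim:
  assumes fin: "finite (carrier G)"
  shows "m_irr G \<le> MaxDim G"
proof -
  obtain s0 where s0: "irredundant G s0 \<and> generate G s0 = carrier G" using exists_irr_gen[OF fin] by blast
  have "\<exists>s. (irredundant G s \<and> generate G s = carrier G) \<and> card s = m_irr G"
    unfolding m_irr_def
  proof (rule fam_in[where A = "carrier G"])
    show "finite (carrier G)" using fin by simp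
    fix M assume "irredundant G M \<and> generate G M = carrier G"
    then show "M \<subseteq> carrier G" by (simp add: irredundant_def)
  qed (use s0 in blast)
  then obtain s where irr: "irredundant G s" and gen: "generate G s = carrier G" and ms: "m_irr G = card s"
    by metis
  have sc: "s \<subseteq> carrier G" using irr unfolding irredundant_def by blast
  define f where "f h = (SOME M. maximal_subgroup G M \<and> generate G (s - {h}) \<subseteq> M)" for h
  have fh: "maximal_subgroup G (f h) \<and> generate G (s - {h}) \<subseteq> f h" if h: "h \<in> s" for h
  proof -
    have "subgroup (generate G (s - {h})) G" using sc by (intro generate_is_subgroup) auto
    moreover have "generate G (s - {h}) \<noteq> generate G s" using irr h unfolding irredundant_def by blast
    then have "generate G (s - {h}) \<noteq> carrier G" using gen by simp
    ultimately have "\<exists>M. maximal_subgroup G M \<and> generate G (s - {h}) \<subseteq> M"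
      using exists_maximal[OF fin] by blast
    then show ?thesis unfolding f_def by (rule someI_ex)
  qed
  have notin: "h \<notin> f h" if h: "h \<in> s" for h
  proof
    assume hin: "h \<in> f h"
    have sub: "subgroup (f h) G" using fh[OF h] unfolding maximal_subgroup_def by blast
    have ne: "f h \<noteq> carrier G" using fh[OF h] unfolding maximal_subgroup_def by blast
    have "s - {h} \<subseteq> generate G (s - {h})" by (rule subsetI, rule generate.incl)
    then have "s - {h} \<subseteq> f h" using fh[OF h] by blast
    then have "s \<subseteq> f h" using hin by blast
    then have "generate G s \<subseteq> f h" by (rule generate_subgroup_incl[OF _ sub])
    then have "carrier G \<subseteq> f h" using gen by simp
    moreover have "f h \<subseteq> carrier G" by (rule subgroup.subset[OF sub])
    ultimately show False using ne by blast
  qed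
  have inother: "h \<in> f h'" if "h \<in> s" "h' \<in> s" "h \<noteq> h'" for h h'
  proof -
    have "h \<in> generate G (s - {h'})" using that by (intro generate.incl) auto
    then show ?thesis using fh[OF that(2)] by blast
  qed
  have inj: "inj_on f s"
  proof (rule inj_onI)
    fix a b assume ab: "a \<in> s" "b \<in> s" "f a = f b"
    show "a = b"
    proof (rule ccontr)
      assume "a \<noteq> b"
      then have "a \<in> f b" using inother ab by blast
      then show False using notin[OF ab(1)] ab(3) by simp
    qed
  qed
  have fins: "finite s" using sc fin finite_subset by blast
  have "general_position G (f ` s)"
  proof (rule gp_intro)
    fix Q assume "Q \<in> f ` s"
    then obtain h where h: "h \<in> s" "Q = f h" by blast
    show "\<exists>x\<in>carrier G. (\<forall>Y\<in>f ` s - {Q}. x \<in> Y) \<and> x \<notin> Q"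
      using h sc notin inother by (intro bexI[of _ h]) auto
  qed (use fins in simp)
  moreover have "\<forall>M\<in>f ` s. maximal_subgroup G M" using fh by blast
  ultimately have "card (f ` s) \<le> MaxDim G" using MaxDim_ge[OF fin] by blast
  then show ?thesis using ms inj by (simp add: card_image)
qed

end

lemma misub_sub: "maximal_inv_subgroup H B N K \<Longrightarrow> K \<subseteq> N"
proof -
  assume "maximal_inv_subgroup H B N K"
  then have "subgroup K (H\<lparr>carrier := N\<rparr>)" unfolding maximal_inv_subgroup_def by blast
  then have "K \<subseteq> carrier (H\<lparr>carrier := N\<rparr>)" by (rule subgroup.subset)
  then show ?thesis by simp
qed

lemma MaxDim_act_ge:
  assumes "finite N" "\<forall>K\<in>\<M>. maximal_inv_subgroup H B N K" "general_position (H\<lparr>carrier := N\<rparr>) \<M>"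
  shows "card \<M> \<le> MaxDim_act H B N"
  unfolding MaxDim_act_def
proof (rule fam_ge[where A = "Pow N"])
  show "finite (Pow N)" using assms(1) by simp
  fix M assume "(\<forall>K\<in>M. maximal_inv_subgroup H B N K) \<and> general_position (H\<lparr>carrier := N\<rparr>) M"
  then show "M \<subseteq> Pow N" using misub_sub by blast
qed (use assms in blast)

lemma MaxDim_act_obtain:
  assumes "finite N"
  obtains \<M> where "\<forall>K\<in>\<M>. maximal_inv_subgroup H B N K" "general_position (H\<lparr>carrier := N\<rparr>) \<M>"
    "card \<M> = MaxDim_act H B N"
proof -
  have "\<exists>\<M>. ((\<forall>K\<in>\<M>. maximal_inv_subgroup H B N K) \<and> general_position (H\<lparr>carrier := N\<rparr>) \<M>) \<and>
     card \<M> = MaxDim_act H B N"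
    unfolding MaxDim_act_def
  proof (rule fam_in[where A = "Pow N"])
    show "finite (Pow N)" using assms(1) by simp
    fix M assume "(\<forall>K\<in>M. maximal_inv_subgroup H B N K) \<and> general_position (H\<lparr>carrier := N\<rparr>) M"
    then show "M \<subseteq> Pow N" using misub_sub by blast
  next
    show "(\<forall>K\<in>{}. maximal_inv_subgroup H B N K) \<and> general_position (H\<lparr>carrier := N\<rparr>) {}"
      unfolding general_position_def by simp
  qed
  then show ?thesis using that by blast
qed


lemma (in group) setmult_sub:
  assumes "K \<lhd> G" "subgroup S G" shows "subgroup (K <#> S) G"
  by (rule second_isomorphism_grp.normal_set_mult_subgroup)
     (simp add: second_isomorphism_grp_def second_isomorphism_grp_axioms_def assms)

lemma (in group) canc1 [simp]: "t \<in> carrier G \<Longrightarrow> x \<in> carrier G \<Longrightarrow> t \<otimes> (inv t \<otimes> x) = x"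
  by (simp add: m_assoc[symmetric])
lemma (in group) canc2 [simp]: "t \<in> carrier G \<Longrightarrow> x \<in> carrier G \<Longrightarrow> inv t \<otimes> (t \<otimes> x) = x"
  by (simp add: m_assoc[symmetric])

locale sdp = group +
  fixes N T
  assumes fin: "finite (carrier G)" and nN: "N \<lhd> G" and sT: "subgroup T G"
    and NT1: "N \<inter> T = {\<one>}" and NT: "N <#> T = carrier G"
    and ab: "\<forall>x\<in>N. \<forall>y\<in>N. x \<otimes> y = y \<otimes> x"
begin

lemma sN: "subgroup N G" using nN by (rule normal_imp_subgroup)
lemma Nc: "x \<in> N \<Longrightarrow> x \<in> carrier G" by (rule subgroup.mem_carrier[OF sN])
lemma Tc: "x \<in> T \<Longrightarrow> x \<in> carrier G" by (rule subgroup.mem_carrier[OF sT])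
lemma Nmult: "x \<in> N \<Longrightarrow> y \<in> N \<Longrightarrow> x \<otimes> y \<in> N" by (rule subgroup.m_closed[OF sN])
lemma Tmult: "x \<in> T \<Longrightarrow> y \<in> T \<Longrightarrow> x \<otimes> y \<in> T" by (rule subgroup.m_closed[OF sT])
lemma Ninv: "x \<in> N \<Longrightarrow> inv x \<in> N" by (rule subgroup.m_inv_closed[OF sN])
lemma Tinv: "x \<in> T \<Longrightarrow> inv x \<in> T" by (rule subgroup.m_inv_closed[OF sT])
lemma None: "\<one> \<in> N" by (rule subgroup.one_closed[OF sN])
lemma Tone: "\<one> \<in> T" by (rule subgroup.one_closed[OF sT])
lemma NTone: "x \<in> N \<Longrightarrow> x \<in> T \<Longrightarrow> x = \<one>"
proof -
  assume "x \<in> N" "x \<in> T"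
  then have "x \<in> N \<inter> T" by (rule IntI)
  then show "x = \<one>" using NT1 by simp
qed

lemma decomp:
  assumes "x \<in> carrier G" obtains n t where "n \<in> N" "t \<in> T" "x = n \<otimes> t"
proof -
  have "x \<in> N <#> T" using assms NT by simp
  then obtain n t where "n \<in> N" "t \<in> T" "x = n \<otimes> t" unfolding set_mult_def by auto
  then show ?thesis using that by simp
qed

lemma NTmem: "n \<in> N \<Longrightarrow> t \<in> T \<Longrightarrow> n \<otimes> t \<in> carrier G"
  using Nc Tc by simp

lemma conjN: "g \<in> carrier G \<Longrightarrow> n \<in> N \<Longrightarrow> g \<otimes> n \<otimes> inv g \<in> N"
  using nN by (rule normal.inv_op_closed2)

lemma conj_inv_intro:
  assumes "A \<subseteq> carrier G" "\<And>t x. t \<in> T \<Longrightarrow> x \<in> A \<Longrightarrow> t \<otimes> x \<otimes> inv t \<in> A"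
  shows "conj_invariant G T A"
  unfolding conj_invariant_def
proof (intro ballI equalityI subsetI)
  fix t y assume t: "t \<in> T" and "y \<in> (\<lambda>k. t \<otimes> k \<otimes> inv t) ` A"
  then obtain k where "k \<in> A" "y = t \<otimes> k \<otimes> inv t" by auto
  then show "y \<in> A" using assms(2)[OF t] by simp
next
  fix t x assume t: "t \<in> T" and x: "x \<in> A"
  have tc: "t \<in> carrier G" using t Tc by blast
  have xc: "x \<in> carrier G" using x assms(1) by blast
  have "inv t \<otimes> x \<otimes> inv (inv t) \<in> A" using assms(2)[OF Tinv[OF t] x] .
  moreover have "x = t \<otimes> (inv t \<otimes> x \<otimes> inv (inv t)) \<otimes> inv t"
    using tc xc by (simp add: m_assoc)
  ultimately show "x \<in> (\<lambda>k. t \<otimes> k \<otimes> inv t) ` A" by (rule rev_image_eqI)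
qed

lemma conj_inv_mem:
  assumes "conj_invariant G T A" "t \<in> T" "x \<in> A"
  shows "t \<otimes> x \<otimes> inv t \<in> A"
proof -
  have "(\<lambda>k. t \<otimes> k \<otimes> inv t) ` A = A" using assms(1,2) unfolding conj_invariant_def by simp
  then show ?thesis using imageI[OF assms(3), of "\<lambda>k. t \<otimes> k \<otimes> inv t"] by simp
qed

lemma inv_normal:
  assumes "subgroup K G" "K \<subseteq> N" "conj_invariant G T K"
  shows "K \<lhd> G"
  unfolding normal_inv_iff
proof (intro conjI ballI assms(1))
  fix x k assume x: "x \<in> carrier G" and k: "k \<in> K"
  obtain n t where nt: "n \<in> N" "t \<in> T" "x = n \<otimes> t" using decomp[OF x] .
  have kN: "k \<in> N" using k assms(2) by blast
  have nc: "n \<in> carrier G" and tc: "t \<in> carrier G" and kc: "k \<in> carrier G"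
    using nt kN Nc Tc by auto
  define k' where "k' = t \<otimes> k \<otimes> inv t"
  have k'K: "k' \<in> K" unfolding k'_def using conj_inv_mem[OF assms(3) nt(2) k] .
  then have k'N: "k' \<in> N" using assms(2) by blast
  have k'c: "k' \<in> carrier G" using k'N Nc by blast
  have "x \<otimes> k \<otimes> inv x = n \<otimes> k' \<otimes> inv n"
    unfolding k'_def nt(3) using nc tc kc by (simp add: inv_mult_group m_assoc)
  also have "\<dots> = k' \<otimes> n \<otimes> inv n" using ab k'N nt(1) by simp
  also have "\<dots> = k'" using k'c nc by (simp add: m_assoc)
  finally show "x \<otimes> k \<otimes> inv x \<in> K" using k'K by simp
qed

lemma sub_N_iff: "subgroup K (G\<lparr>carrier := N\<rparr>) \<longleftrightarrow> subgroup K G \<and> K \<subseteq> N"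
proof
  assume a: "subgroup K (G\<lparr>carrier := N\<rparr>)"
  have "subgroup K G" using incl_subgroup[OF sN a] .
  moreover have "K \<subseteq> N" using subgroup.subset[OF a] by simp
  ultimately show "subgroup K G \<and> K \<subseteq> N" by blast
next
  assume "subgroup K G \<and> K \<subseteq> N"
  then show "subgroup K (G\<lparr>carrier := N\<rparr>)" using subgroup_incl[OF _ sN] by simp
qed

lemma sub_T_iff: "subgroup K (G\<lparr>carrier := T\<rparr>) \<longleftrightarrow> subgroup K G \<and> K \<subseteq> T"
proof
  assume a: "subgroup K (G\<lparr>carrier := T\<rparr>)"
  have "subgroup K G" using incl_subgroup[OF sT a] .
  moreover have "K \<subseteq> T" using subgroup.subset[OF a] by simp
  ultimately show "subgroup K G \<and> K \<subseteq> T" by blast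
next
  assume "subgroup K G \<and> K \<subseteq> T"
  then show "subgroup K (G\<lparr>carrier := T\<rparr>)" using subgroup_incl[OF _ sT] by simp
qed


lemma smI: "a \<in> A \<Longrightarrow> b \<in> B \<Longrightarrow> a \<otimes> b \<in> A <#> B"
  unfolding set_mult_def by auto

lemma smE: assumes "x \<in> A <#> B" obtains a b where "a \<in> A" "b \<in> B" "x = a \<otimes> b"
  using assms unfolding set_mult_def by auto

lemma sm_in_sub:
  assumes "subgroup L G" "A \<subseteq> L" "B \<subseteq> L" shows "A <#> B \<subseteq> L"
proof
  fix x assume "x \<in> A <#> B"
  then obtain a b where ab: "a \<in> A" "b \<in> B" "x = a \<otimes> b" by (rule smE)
  have "a \<in> L" "b \<in> L" using ab assms by auto
  then show "x \<in> L" using ab(3) subgroup.m_closed[OF assms(1)] by simp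
qed

lemma KT_inter:
  assumes "K \<subseteq> N" shows "(K <#> T) \<inter> N = K"
proof (intro equalityI subsetI)
  fix x assume x: "x \<in> (K <#> T) \<inter> N"
  then obtain k t where kt: "k \<in> K" "t \<in> T" "x = k \<otimes> t" by (meson IntD1 smE)
  have kN: "k \<in> N" using kt(1) assms by auto
  have xN: "x \<in> N" using x by simp
  have kc: "k \<in> carrier G" and tc: "t \<in> carrier G" using kN kt Nc Tc by auto
  have "t = inv k \<otimes> x" using kt(3) kc tc by simp
  then have "t \<in> N" using Nmult[OF Ninv[OF kN] xN] by simp
  then have "t = \<one>" using NTone kt(2) by simp
  then show "x \<in> K" using kt kc by simp
next
  fix x assume x: "x \<in> K"
  then have xN: "x \<in> N" using assms by auto
  have "x = x \<otimes> \<one>" using Nc[OF xN] by simp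
  then have "x \<in> K <#> T" using smI[OF x Tone] by simp
  then show "x \<in> (K <#> T) \<inter> N" using xN by simp
qed

lemma NM_inter:
  assumes "M \<subseteq> T" "\<one> \<in> M" shows "(N <#> M) \<inter> T = M"
proof (intro equalityI subsetI)
  fix x assume x: "x \<in> (N <#> M) \<inter> T"
  then obtain n m where nm: "n \<in> N" "m \<in> M" "x = n \<otimes> m" by (meson IntD1 smE)
  have mT: "m \<in> T" using nm(2) assms by auto
  have xT: "x \<in> T" using x by simp
  have nc: "n \<in> carrier G" and mc: "m \<in> carrier G" using mT nm Nc Tc by auto
  have "n = x \<otimes> inv m" using nm(3) nc mc by (simp add: m_assoc)
  then have "n \<in> T" using Tmult[OF xT Tinv[OF mT]] by simp
  then have "n = \<one>" using NTone nm(1) by simp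
  then show "x \<in> M" using nm mc by simp
next
  fix x assume x: "x \<in> M"
  then have xT: "x \<in> T" using assms by auto
  have "x = \<one> \<otimes> x" using Tc[OF xT] by simp
  then have "x \<in> N <#> M" using smI[OF None x] by simp
  then show "x \<in> (N <#> M) \<inter> T" using xT by simp
qed

lemma N_sub_NM: "\<one> \<in> M \<Longrightarrow> N \<subseteq> N <#> M"
proof
  fix x assume "\<one> \<in> M" "x \<in> N"
  then show "x \<in> N <#> M" using smI[of x N \<one> M] Nc by simp
qed

lemma T_sub_KT: "\<one> \<in> K \<Longrightarrow> T \<subseteq> K <#> T"
proof
  fix x assume "\<one> \<in> K" "x \<in> T"
  then show "x \<in> K <#> T" using smI[of \<one> K x T] Tc by simp
qed

lemma ded_T:
  assumes "subgroup L G" "T \<subseteq> L" shows "L \<subseteq> (L \<inter> N) <#> T"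
proof
  fix x assume x: "x \<in> L"
  then have xc: "x \<in> carrier G" using subgroup.mem_carrier[OF assms(1)] by simp
  obtain n t where nt: "n \<in> N" "t \<in> T" "x = n \<otimes> t" using decomp[OF xc] .
  have nc: "n \<in> carrier G" and tc: "t \<in> carrier G" using nt Nc Tc by auto
  have "n = x \<otimes> inv t" using nt nc tc by (simp add: m_assoc)
  moreover have "x \<otimes> inv t \<in> L" using x assms nt(2) subgroup.m_closed[OF assms(1)]
      subgroup.m_inv_closed[OF assms(1)] by auto
  ultimately have "n \<in> L \<inter> N" using nt by simp
  then show "x \<in> (L \<inter> N) <#> T" using smI nt by simp
qed

lemma ded_N:
  assumes "subgroup L G" "N \<subseteq> L" shows "L \<subseteq> N <#> (L \<inter> T)"
proof
  fix x assume x: "x \<in> L"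
  then have xc: "x \<in> carrier G" using subgroup.mem_carrier[OF assms(1)] by simp
  obtain n t where nt: "n \<in> N" "t \<in> T" "x = n \<otimes> t" using decomp[OF xc] .
  have nc: "n \<in> carrier G" and tc: "t \<in> carrier G" using nt Nc Tc by auto
  have "t = inv n \<otimes> x" using nt nc tc by simp
  moreover have "inv n \<otimes> x \<in> L" using x assms nt(1) subgroup.m_closed[OF assms(1)]
      subgroup.m_inv_closed[OF assms(1)] by auto
  ultimately have "t \<in> L \<inter> T" using nt by simp
  then show "x \<in> N <#> (L \<inter> T)" using smI nt by simp
qed

lemma KT_max:
  assumes K: "maximal_inv_subgroup G T N K"
  shows "maximal_subgroup G (K <#> T)"
proof -
  have sK: "subgroup K G" and KN: "K \<subseteq> N" and Kne: "K \<noteq> N" and Kinv: "conj_invariant G T K"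
    and Kmax: "\<And>L. subgroup L G \<Longrightarrow> L \<subseteq> N \<Longrightarrow> conj_invariant G T L \<Longrightarrow> K \<subseteq> L \<Longrightarrow> L = K \<or> L = N"
    using K unfolding maximal_inv_subgroup_def sub_N_iff by auto
  have sKT: "subgroup (K <#> T) G" using setmult_sub[OF inv_normal[OF sK KN Kinv] sT] .
  have one: "\<one> \<in> K" using subgroup.one_closed[OF sK] .
  show ?thesis unfolding maximal_subgroup_def
  proof (intro conjI allI impI sKT)
    show "K <#> T \<noteq> carrier G"
    proof
      assume "K <#> T = carrier G"
      then have "(K <#> T) \<inter> N = N" using subgroup.subset[OF sN] by auto
      then show False using KT_inter[OF KN] Kne by simp
    qed
  next
    fix L assume L: "subgroup L G \<and> K <#> T \<subseteq> L"
    then have sL: "subgroup L G" and KTL: "K <#> T \<subseteq> L" by auto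
    have TL: "T \<subseteq> L" using T_sub_KT[OF one] KTL by simp
    have sLN: "subgroup (L \<inter> N) G" using subgroups_Inter_pair[OF sL sN] .
    have KL: "K \<subseteq> L \<inter> N" using KN KTL KT_inter[OF KN] by auto
    have inv: "conj_invariant G T (L \<inter> N)"
    proof (rule conj_inv_intro)
      show "L \<inter> N \<subseteq> carrier G" using subgroup.subset[OF sN] by auto
      fix t x assume t: "t \<in> T" and x: "x \<in> L \<inter> N"
      have tL: "t \<in> L" using t TL by auto
      have "t \<otimes> x \<otimes> inv t \<in> L" using tL x subgroup.m_closed[OF sL] subgroup.m_inv_closed[OF sL] by simp
      moreover have "t \<otimes> x \<otimes> inv t \<in> N" using conjN[OF Tc[OF t]] x by simp
      ultimately show "t \<otimes> x \<otimes> inv t \<in> L \<inter> N" by simp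
    qed
    have "L \<inter> N = K \<or> L \<inter> N = N" using Kmax[OF sLN _ inv KL] by simp
    then show "L = K <#> T \<or> L = carrier G"
    proof
      assume "L \<inter> N = K"
      then have "L \<subseteq> K <#> T" using ded_T[OF sL TL] by simp
      then show ?thesis using KTL by auto
    next
      assume "L \<inter> N = N"
      then have "N \<subseteq> L" by auto
      then have "carrier G \<subseteq> L" using sm_in_sub[OF sL _ TL] NT by auto
      then show ?thesis using subgroup.subset[OF sL] by auto
    qed
  qed
qed

lemma NM_max:
  assumes M: "maximal_subgroup (G\<lparr>carrier := T\<rparr>) M"
  shows "maximal_subgroup G (N <#> M)"
proof -
  have sM: "subgroup M G" and MT: "M \<subseteq> T" and Mne: "M \<noteq> T"
    and Mmax: "\<And>L. subgroup L G \<Longrightarrow> L \<subseteq> T \<Longrightarrow> M \<subseteq> L \<Longrightarrow> L = M \<or> L = T"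
    using M unfolding maximal_subgroup_def sub_T_iff by auto
  have sNM: "subgroup (N <#> M) G" using setmult_sub[OF nN sM] .
  have one: "\<one> \<in> M" using subgroup.one_closed[OF sM] .
  show ?thesis unfolding maximal_subgroup_def
  proof (intro conjI allI impI sNM)
    show "N <#> M \<noteq> carrier G"
    proof
      assume "N <#> M = carrier G"
      then have "(N <#> M) \<inter> T = T" using subgroup.subset[OF sT] by auto
      then show False using NM_inter[OF MT one] Mne by simp
    qed
  next
    fix L assume L: "subgroup L G \<and> N <#> M \<subseteq> L"
    then have sL: "subgroup L G" and NML: "N <#> M \<subseteq> L" by auto
    have NL: "N \<subseteq> L" using N_sub_NM[OF one] NML by simp
    have sLT: "subgroup (L \<inter> T) G" using subgroups_Inter_pair[OF sL sT] .
    have MsL: "M \<subseteq> L \<inter> T" using MT NML NM_inter[OF MT one] by auto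
    have "L \<inter> T = M \<or> L \<inter> T = T" using Mmax[OF sLT _ MsL] by simp
    then show "L = N <#> M \<or> L = carrier G"
    proof
      assume "L \<inter> T = M"
      then have "L \<subseteq> N <#> M" using ded_N[OF sL NL] by simp
      then show ?thesis using NML by auto
    next
      assume "L \<inter> T = T"
      then have "T \<subseteq> L" by auto
      then have "carrier G \<subseteq> L" using sm_in_sub[OF sL NL] NT by auto
      then show ?thesis using subgroup.subset[OF sL] by auto
    qed
  qed
qed


lemma finN: "finite N" using finite_subset[OF subgroup.subset[OF sN] fin] .
lemma grpT: "group (G\<lparr>carrier := T\<rparr>)" using subgroup_imp_group[OF sT] .
lemma finT: "finite (carrier (G\<lparr>carrier := T\<rparr>))"
  using finite_subset[OF subgroup.subset[OF sT] fin] by simp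

lemma misubD:
  assumes "maximal_inv_subgroup G T N K" shows "K \<subseteq> N" "K \<noteq> N"
  using assms unfolding maximal_inv_subgroup_def sub_N_iff by auto

lemma maxTD:
  assumes "maximal_subgroup (G\<lparr>carrier := T\<rparr>) M" shows "M \<subseteq> T" "\<one> \<in> M"
proof -
  have "subgroup M (G\<lparr>carrier := T\<rparr>)" using assms unfolding maximal_subgroup_def by blast
  then have s: "subgroup M G \<and> M \<subseteq> T" unfolding sub_T_iff .
  then show "M \<subseteq> T" by simp
  show "\<one> \<in> M" using subgroup.one_closed s by blast
qed

lemma lower: "MaxDim_act G T N + MaxDim (G\<lparr>carrier := T\<rparr>) \<le> MaxDim G"
proof -
  obtain \<K> where K1: "\<forall>K\<in>\<K>. maximal_inv_subgroup G T N K"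
    and K2: "general_position (G\<lparr>carrier := N\<rparr>) \<K>" and K3: "card \<K> = MaxDim_act G T N"
    using MaxDim_act_obtain[OF finN] by blast
  obtain \<M> where M1: "\<forall>M\<in>\<M>. maximal_subgroup (G\<lparr>carrier := T\<rparr>) M"
    and M2: "general_position (G\<lparr>carrier := T\<rparr>) \<M>" and M3: "card \<M> = MaxDim (G\<lparr>carrier := T\<rparr>)"
    using group.MaxDim_obtain[OF grpT finT] by blast
  have KN: "K \<subseteq> N" and Kne: "K \<noteq> N" if "K \<in> \<K>" for K using misubD K1 that by auto
  have MT: "M \<subseteq> T" and M1': "\<one> \<in> M" if "M \<in> \<M>" for M using maxTD M1 that by auto
  define F1 where "F1 = (\<lambda>K. K <#> T) ` \<K>"
  define F2 where "F2 = (\<lambda>M. N <#> M) ` \<M>"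
  have fK: "finite \<K>" using gp_finite[OF K2] .
  have fM: "finite \<M>" using gp_finite[OF M2] .
  have inj1: "inj_on (\<lambda>K. K <#> T) \<K>"
  proof (rule inj_onI)
    fix K K' assume a: "K \<in> \<K>" "K' \<in> \<K>" "K <#> T = K' <#> T"
    have "K = (K <#> T) \<inter> N" using KT_inter[OF KN[OF a(1)]] by simp
    also have "\<dots> = (K' <#> T) \<inter> N" using a(3) by simp
    also have "\<dots> = K'" using KT_inter[OF KN[OF a(2)]] by simp
    finally show "K = K'" .
  qed
  have inj2: "inj_on (\<lambda>M. N <#> M) \<M>"
  proof (rule inj_onI)
    fix M M' assume a: "M \<in> \<M>" "M' \<in> \<M>" "N <#> M = N <#> M'"
    have "M = (N <#> M) \<inter> T" using NM_inter[OF MT[OF a(1)] M1'[OF a(1)]] by simp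
    also have "\<dots> = (N <#> M') \<inter> T" using a(3) by simp
    also have "\<dots> = M'" using NM_inter[OF MT[OF a(2)] M1'[OF a(2)]] by simp
    finally show "M = M'" .
  qed
  have disj: "F1 \<inter> F2 = {}"
  proof (rule ccontr)
    assume "F1 \<inter> F2 \<noteq> {}"
    then obtain K M where KM: "K \<in> \<K>" "M \<in> \<M>" "K <#> T = N <#> M" unfolding F1_def F2_def by auto
    have "K = (K <#> T) \<inter> N" using KT_inter[OF KN[OF KM(1)]] by simp
    also have "\<dots> = N" using KM(3) N_sub_NM[OF M1'[OF KM(2)]] by auto
    finally show False using Kne[OF KM(1)] by simp
  qed
  have card: "card (F1 \<union> F2) = card \<K> + card \<M>"
  proof -
    have "card (F1 \<union> F2) = card F1 + card F2"
      using card_Un_disjoint[of F1 F2] disj fK fM unfolding F1_def F2_def by auto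
    also have "card F1 = card \<K>" unfolding F1_def using card_image[OF inj1] .
    also have "card F2 = card \<M>" unfolding F2_def using card_image[OF inj2] .
    finally show ?thesis .
  qed
  have maxs: "\<forall>Y\<in>F1 \<union> F2. maximal_subgroup G Y"
    unfolding F1_def F2_def using KT_max NM_max K1 M1 by auto
  have gp: "general_position G (F1 \<union> F2)"
  proof (rule gp_intro)
    show "finite (F1 \<union> F2)" unfolding F1_def F2_def using fK fM by simp
  next
    fix Q assume Q: "Q \<in> F1 \<union> F2"
    then show "\<exists>x\<in>carrier G. (\<forall>Y\<in>F1 \<union> F2 - {Q}. x \<in> Y) \<and> x \<notin> Q"
    proof
      assume "Q \<in> F1"
      then obtain K0 where K0: "K0 \<in> \<K>" "Q = K0 <#> T" unfolding F1_def by auto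
      obtain x where x: "x \<in> carrier (G\<lparr>carrier := N\<rparr>)" "\<forall>Y\<in>\<K>-{K0}. x \<in> Y" "x \<notin> K0"
        using gp_elim[OF K2 K0(1)] by blast
      have xN: "x \<in> N" using x(1) by simp
      have xc: "x \<in> carrier G" using Nc[OF xN] .
      have x1: "x = x \<otimes> \<one>" using xc by simp
      have "x \<in> Y" if Y: "Y \<in> F1 \<union> F2 - {Q}" for Y
      proof -
        from Y have "Y \<in> F1 \<or> Y \<in> F2" by auto
        then show ?thesis
        proof
          assume "Y \<in> F1"
          then obtain K where K: "K \<in> \<K>" "Y = K <#> T" unfolding F1_def by auto
          then have "K \<noteq> K0" using Y K0 by auto
          then have "x \<in> K" using x(2) K(1) by auto
          then show ?thesis using K(2) smI[OF _ Tone] x1 by metis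
        next
          assume "Y \<in> F2"
          then obtain M where M: "M \<in> \<M>" "Y = N <#> M" unfolding F2_def by auto
          then show ?thesis using smI[OF xN M1'[OF M(1)]] x1 by metis
        qed
      qed
      moreover have "x \<notin> Q"
      proof
        assume "x \<in> Q"
        then have "x \<in> (K0 <#> T) \<inter> N" using K0 xN by simp
        then show False using KT_inter[OF KN[OF K0(1)]] x(3) by simp
      qed
      ultimately show ?thesis using xc by blast
    next
      assume "Q \<in> F2"
      then obtain M0 where M0: "M0 \<in> \<M>" "Q = N <#> M0" unfolding F2_def by auto
      obtain x where x: "x \<in> carrier (G\<lparr>carrier := T\<rparr>)" "\<forall>Y\<in>\<M>-{M0}. x \<in> Y" "x \<notin> M0"
        using gp_elim[OF M2 M0(1)] by blast
      have xT: "x \<in> T" using x(1) by simp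
      have xc: "x \<in> carrier G" using Tc[OF xT] .
      have x1: "x = \<one> \<otimes> x" using xc by simp
      have "x \<in> Y" if Y: "Y \<in> F1 \<union> F2 - {Q}" for Y
      proof -
        from Y have "Y \<in> F1 \<or> Y \<in> F2" by auto
        then show ?thesis
        proof
          assume "Y \<in> F1"
          then obtain K where K: "K \<in> \<K>" "Y = K <#> T" unfolding F1_def by auto
          have "\<one> \<in> K" using K1 K(1) unfolding maximal_inv_subgroup_def sub_N_iff
            using subgroup.one_closed by blast
          then show ?thesis using K(2) smI[OF _ xT] x1 by metis
        next
          assume "Y \<in> F2"
          then obtain M where M: "M \<in> \<M>" "Y = N <#> M" unfolding F2_def by auto
          then have "M \<noteq> M0" using Y M0 by auto
          then have "x \<in> M" using x(2) M(1) by auto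
          then show ?thesis using M(2) smI[OF None] x1 by metis
        qed
      qed
      moreover have "x \<notin> Q"
      proof
        assume "x \<in> Q"
        then have "x \<in> (N <#> M0) \<inter> T" using M0 xT by simp
        then show False using NM_inter[OF MT[OF M0(1)] M1'[OF M0(1)]] x(3) by simp
      qed
      ultimately show ?thesis using xc by blast
    qed
  qed
  have "card (F1 \<union> F2) \<le> MaxDim G" using MaxDim_ge[OF fin maxs gp] .
  then show ?thesis using card K3 M3 by simp
qed


lemma M_N_max:
  assumes M: "maximal_subgroup G M" and nsub: "\<not> N \<subseteq> M"
  shows "maximal_inv_subgroup G T N (M \<inter> N)"
proof -
  have sM: "subgroup M G" and Mmax: "\<And>K. subgroup K G \<Longrightarrow> M \<subseteq> K \<Longrightarrow> K = M \<or> K = carrier G"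
    using M unfolding maximal_subgroup_def by auto
  have sNM: "subgroup (N <#> M) G" using setmult_sub[OF nN sM] .
  have oneM: "\<one> \<in> M" using subgroup.one_closed[OF sM] .
  have MNM: "M \<subseteq> N <#> M"
  proof
    fix m assume m: "m \<in> M"
    then have "\<one> \<otimes> m = m" using subgroup.mem_carrier[OF sM] by simp
    then show "m \<in> N <#> M" using smI[OF None m] by simp
  qed
  have "N <#> M \<noteq> M" using N_sub_NM[OF oneM] nsub by auto
  then have NMc: "N <#> M = carrier G" using Mmax[OF sNM MNM] by simp
  have sMN: "subgroup (M \<inter> N) G" using subgroups_Inter_pair[OF sM sN] .
  have conjMN: "g \<otimes> x \<otimes> inv g \<in> M \<inter> N" if g: "g \<in> carrier G" and x: "x \<in> M \<inter> N" for g x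
  proof -
    obtain n m where nm: "n \<in> N" "m \<in> M" "g = n \<otimes> m" using g NMc smE by metis
    have nc: "n \<in> carrier G" using Nc nm by simp
    have mc: "m \<in> carrier G" using subgroup.mem_carrier[OF sM] nm by simp
    have xc: "x \<in> carrier G" using x Nc by simp
    define y where "y = m \<otimes> x \<otimes> inv m"
    have yM: "y \<in> M" unfolding y_def using x nm(2) subgroup.m_closed[OF sM] subgroup.m_inv_closed[OF sM] by simp
    have yN: "y \<in> N" unfolding y_def using conjN[OF mc] x by simp
    have yc: "y \<in> carrier G" using yN Nc by simp
    have "g \<otimes> x \<otimes> inv g = n \<otimes> y \<otimes> inv n"
      unfolding y_def nm(3) using nc mc xc by (simp add: inv_mult_group m_assoc)
    also have "\<dots> = y \<otimes> n \<otimes> inv n" using ab yN nm(1) by simp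
    also have "\<dots> = y" using yc nc by (simp add: m_assoc)
    finally show ?thesis using yM yN by simp
  qed
  have inv: "conj_invariant G T (M \<inter> N)"
  proof (rule conj_inv_intro)
    show "M \<inter> N \<subseteq> carrier G" using subgroup.subset[OF sN] by auto
  qed (use conjMN Tc in blast)
  show ?thesis unfolding maximal_inv_subgroup_def sub_N_iff
  proof (intro conjI allI impI sMN inv)
    show "M \<inter> N \<subseteq> N" by simp
    show "M \<inter> N \<noteq> N" using nsub by auto
  next
    fix L assume L: "(subgroup L G \<and> L \<subseteq> N) \<and> conj_invariant G T L \<and> M \<inter> N \<subseteq> L"
    then have sL: "subgroup L G" and LN: "L \<subseteq> N" and Linv: "conj_invariant G T L" and MNL: "M \<inter> N \<subseteq> L"
      by auto
    have nL: "L \<lhd> G" using inv_normal[OF sL LN Linv] .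
    have sLM: "subgroup (L <#> M) G" using setmult_sub[OF nL sM] .
    have oneL: "\<one> \<in> L" using subgroup.one_closed[OF sL] .
    have MLM: "M \<subseteq> L <#> M"
    proof
      fix m assume m: "m \<in> M"
      then have "\<one> \<otimes> m = m" using subgroup.mem_carrier[OF sM] by simp
      then show "m \<in> L <#> M" using smI[OF oneL m] by simp
    qed
    have "L <#> M = M \<or> L <#> M = carrier G" using Mmax[OF sLM MLM] .
    then show "L = M \<inter> N \<or> L = N"
    proof
      assume a: "L <#> M = M"
      have "L \<subseteq> L <#> M"
      proof
        fix l assume l: "l \<in> L"
        then have "l \<otimes> \<one> = l" using subgroup.mem_carrier[OF sL] by simp
        then show "l \<in> L <#> M" using smI[OF l oneM] by simp
      qed
      then have "L \<subseteq> M \<inter> N" using a LN by auto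
      then show ?thesis using MNL by auto
    next
      assume a: "L <#> M = carrier G"
      have "N \<subseteq> L"
      proof
        fix n assume n: "n \<in> N"
        then have "n \<in> L <#> M" using a Nc by simp
        then obtain l m where lm: "l \<in> L" "m \<in> M" "n = l \<otimes> m" by (rule smE)
        have lN: "l \<in> N" using lm LN by auto
        have lc: "l \<in> carrier G" and mc: "m \<in> carrier G" using lN Nc lm subgroup.mem_carrier[OF sM] by auto
        have "m = inv l \<otimes> n" using lm lc mc by simp
        then have "m \<in> N" using Nmult[OF Ninv[OF lN] n] by simp
        then have "m \<in> L" using MNL lm by auto
        then show "n \<in> L" using lm subgroup.m_closed[OF sL] by simp
      qed
      then show ?thesis using LN by auto
    qed
  qed
qed


lemma upper: "MaxDim G \<le> MaxDim_act G T N + i_irr (G\<lparr>carrier := T\<rparr>)"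
proof -
  obtain \<M> where Mmax: "\<forall>M\<in>\<M>. maximal_subgroup G M" and Mgp: "general_position G \<M>"
    and Mc: "card \<M> = MaxDim G"
    using MaxDim_obtain[OF fin] by blast
  have fM: "finite \<M>" using gp_finite[OF Mgp] .
  have sub\<M>: "subgroup M G" if "M \<in> \<M>" for M using Mmax that unfolding maximal_subgroup_def by blast
  define P where "P S \<longleftrightarrow> S \<subseteq> \<M> \<and> N \<inter> \<Inter>S = N \<inter> \<Inter>\<M>" for S
  have "P \<M>" unfolding P_def by simp
  then obtain S where PS: "P S" and Smin: "\<forall>S'. P S' \<longrightarrow> card S \<le> card S'"
    using ex_has_least_nat[of P \<M> card] by meson
  have SM: "S \<subseteq> \<M>" and SI: "N \<inter> \<Inter>S = N \<inter> \<Inter>\<M>" using PS unfolding P_def by auto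
  have fS: "finite S" using finite_subset[OF SM fM] .
  have drop: "N \<inter> \<Inter>(S - {M}) \<noteq> N \<inter> \<Inter>S" if M: "M \<in> S" for M
  proof
    assume eq: "N \<inter> \<Inter>(S - {M}) = N \<inter> \<Inter>S"
    then have "P (S - {M})" using SM SI unfolding P_def by auto
    then have "card S \<le> card (S - {M})" using Smin by blast
    then show False using card_Diff1_less[OF fS M] by linarith
  qed
  have InterS: "\<Inter>S = M \<inter> \<Inter>(S - {M})" if "M \<in> S" for M
  proof -
    have "S = insert M (S - {M})" using that by auto
    then have "\<Inter>S = \<Inter>(insert M (S - {M}))" by simp
    also have "\<dots> = M \<inter> \<Inter>(S - {M})" by (rule Inter_insert)
    finally show ?thesis .
  qed
  have notN: "\<not> N \<subseteq> M" if M: "M \<in> S" for M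
  proof
    assume "N \<subseteq> M"
    then have "N \<inter> \<Inter>(S - {M}) = N \<inter> \<Inter>S" using InterS[OF M] by auto
    then show False using drop[OF M] by simp
  qed
  have injS: "inj_on (\<lambda>M. M \<inter> N) S"
  proof (rule inj_onI)
    fix M1 M2 assume a: "M1 \<in> S" "M2 \<in> S" "M1 \<inter> N = M2 \<inter> N"
    show "M1 = M2"
    proof (rule ccontr)
      assume ne: "M1 \<noteq> M2"
      have "N \<inter> \<Inter>(S - {M1}) \<subseteq> M1"
      proof
        fix x assume x: "x \<in> N \<inter> \<Inter>(S - {M1})"
        then have "x \<in> M2" using a(2) ne by auto
        then have "x \<in> M2 \<inter> N" using x by simp
        then have "x \<in> M1 \<inter> N" using a(3) by simp
        then show "x \<in> M1" by simp
      qed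
      then have "N \<inter> \<Inter>(S - {M1}) = N \<inter> \<Inter>S" using InterS[OF a(1)] by auto
      then show False using drop[OF a(1)] by simp
    qed
  qed
  define \<K> where "\<K> = (\<lambda>M. M \<inter> N) ` S"
  have Kmax: "\<forall>K\<in>\<K>. maximal_inv_subgroup G T N K"
    unfolding \<K>_def using M_N_max Mmax SM notN by blast
  have Kgp: "general_position (G\<lparr>carrier := N\<rparr>) \<K>"
  proof (rule gp_intro)
    show "finite \<K>" unfolding \<K>_def using fS by simp
  next
    fix Q assume "Q \<in> \<K>"
    then obtain M0 where M0: "M0 \<in> S" "Q = M0 \<inter> N" unfolding \<K>_def by auto
    have "N \<inter> \<Inter>S \<subseteq> N \<inter> \<Inter>(S - {M0})" by auto
    then obtain x where x: "x \<in> N \<inter> \<Inter>(S - {M0})" "x \<notin> N \<inter> \<Inter>S" using drop[OF M0(1)] by blast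
    have xM0: "x \<notin> M0" using x InterS[OF M0(1)] by auto
    have "x \<in> Y" if Y: "Y \<in> \<K> - {Q}" for Y
    proof -
      obtain M where M: "M \<in> S" "Y = M \<inter> N" using Y unfolding \<K>_def by auto
      then have "M \<noteq> M0" using Y M0 by auto
      then show ?thesis using x M by auto
    qed
    moreover have "x \<notin> Q" using xM0 M0 by simp
    moreover have "x \<in> carrier (G\<lparr>carrier := N\<rparr>)" using x by simp
    ultimately show "\<exists>x\<in>carrier (G\<lparr>carrier := N\<rparr>). (\<forall>Y\<in>\<K> - {Q}. x \<in> Y) \<and> x \<notin> Q" by blast
  qed
  have cardS: "card S \<le> MaxDim_act G T N"
  proof -
    have "card \<K> \<le> MaxDim_act G T N" using MaxDim_act_ge[OF finN Kmax Kgp] .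
    moreover have "card \<K> = card S" unfolding \<K>_def using card_image[OF injS] .
    ultimately show ?thesis by simp
  qed
  define R where "R = \<M> - S"
  have cardR: "card R = card \<M> - card S" unfolding R_def using card_Diff_subset[OF fS SM] .
  define xm where "xm M = (SOME x. x \<in> carrier G \<and> (\<forall>Y\<in>\<M>-{M}. x \<in> Y) \<and> x \<notin> M)" for M
  have xm: "xm M \<in> carrier G \<and> (\<forall>Y\<in>\<M>-{M}. xm M \<in> Y) \<and> xm M \<notin> M" if "M \<in> \<M>" for M
  proof -
    have "\<exists>x. x \<in> carrier G \<and> (\<forall>Y\<in>\<M>-{M}. x \<in> Y) \<and> x \<notin> M" using gp_elim[OF Mgp that] by blast
    then show ?thesis unfolding xm_def by (rule someI_ex)
  qed
  define tp where "tp y = (SOME t. t \<in> T \<and> (\<exists>n\<in>N. y = n \<otimes> t))" for y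
  have tp: "tp y \<in> T \<and> (\<exists>n\<in>N. y = n \<otimes> tp y)" if yc: "y \<in> carrier G" for y
  proof -
    obtain n t where "n \<in> N" "t \<in> T" "y = n \<otimes> t" using decomp[OF yc] .
    then have "\<exists>t. t \<in> T \<and> (\<exists>n\<in>N. y = n \<otimes> t)" by blast
    then show ?thesis unfolding tp_def by (rule someI_ex)
  qed
  define V where "V M = \<Inter>(insert M S)" for M
  define W where "W M = T \<inter> (N <#> V M)" for M
  have sW: "subgroup (W M) G" if M: "M \<in> \<M>" for M
  proof -
    have "subgroup (V M) G" unfolding V_def
      by (rule subgroups_Inter) (use M SM sub\<M> in auto)
    then have "subgroup (N <#> V M) G" using setmult_sub[OF nN] by simp
    then show ?thesis unfolding W_def using subgroups_Inter_pair[OF sT] by simp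
  qed
  define f where "f M = tp (xm M)" for M
  have fT: "f M \<in> T" if "M \<in> \<M>" for M unfolding f_def using tp xm that by blast
  have key1: "f L \<in> W M" if L: "L \<in> R" and M: "M \<in> R" and LM: "L \<noteq> M" for L M
  proof -
    have LM': "L \<in> \<M>" using L unfolding R_def by simp
    have xL: "xm L \<in> carrier G" "\<forall>Y\<in>\<M>-{L}. xm L \<in> Y" using xm[OF LM'] by auto
    have "insert M S \<subseteq> \<M> - {L}" using L M LM SM unfolding R_def by auto
    then have xV: "xm L \<in> V M" unfolding V_def using xL(2) by auto
    obtain n where n: "n \<in> N" "xm L = n \<otimes> f L" using tp[OF xL(1)] unfolding f_def by blast
    have nc: "n \<in> carrier G" using Nc n by simp
    have fc: "f L \<in> carrier G" using Tc fT[OF LM'] by simp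
    have "f L = inv n \<otimes> xm L" using n nc fc by simp
    then have "f L \<in> N <#> V M" using smI[OF Ninv[OF n(1)] xV] by simp
    then show ?thesis unfolding W_def using fT[OF LM'] by simp
  qed
  have key2: "f M \<notin> W M" if M: "M \<in> R" for M
  proof
    assume a: "f M \<in> W M"
    have MM: "M \<in> \<M>" and MS: "M \<notin> S" using M unfolding R_def by auto
    have xM: "xm M \<in> carrier G" "\<forall>Y\<in>\<M>-{M}. xm M \<in> Y" "xm M \<notin> M" using xm[OF MM] by auto
    obtain n where n: "n \<in> N" "xm M = n \<otimes> f M" using tp[OF xM(1)] unfolding f_def by blast
    obtain n' v where nv: "n' \<in> N" "v \<in> V M" "f M = n' \<otimes> v" using a unfolding W_def by (meson IntD2 smE)
    have vM: "v \<in> M" and vS: "\<forall>Y\<in>S. v \<in> Y" using nv(2) unfolding V_def by auto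
    have vc: "v \<in> carrier G" using vM subgroup.mem_carrier[OF sub\<M>[OF MM]] by simp
    have nc: "n \<in> carrier G" "n' \<in> carrier G" using Nc n nv by auto
    define z where "z = xm M \<otimes> inv v"
    have "z = n \<otimes> n'" unfolding z_def using n(2) nv(3) nc vc by (simp add: m_assoc)
    then have zN: "z \<in> N" using Nmult n nv by simp
    have zS: "z \<in> Y" if Y: "Y \<in> S" for Y
    proof -
      have YM: "Y \<in> \<M>" using Y SM by auto
      have "xm M \<in> Y" using xM(2) Y YM MS by auto
      moreover have "v \<in> Y" using vS Y by auto
      ultimately show ?thesis unfolding z_def
        using subgroup.m_closed[OF sub\<M>[OF YM]] subgroup.m_inv_closed[OF sub\<M>[OF YM]] by simp
    qed
    then have "z \<in> N \<inter> \<Inter>S" using zN by auto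
    then have "z \<in> M" using SI MM by auto
    moreover have "xm M = z \<otimes> v" unfolding z_def using xM(1) vc by (simp add: m_assoc)
    ultimately have "xm M \<in> M" using vM subgroup.m_closed[OF sub\<M>[OF MM]] by simp
    then show False using xM(3) by simp
  qed
  have RM: "R \<subseteq> \<M>" unfolding R_def by auto
  have injf: "inj_on f R"
  proof (rule inj_onI)
    fix L M assume a: "L \<in> R" "M \<in> R" "f L = f M"
    show "L = M"
    proof (rule ccontr)
      assume "L \<noteq> M"
      then have "f L \<in> W M" using key1 a by blast
      then show False using key2[OF a(2)] a(3) by simp
    qed
  qed
  define s where "s = f ` R"
  have sT': "s \<subseteq> T" unfolding s_def using fT RM by auto
  have irr: "irredundant (G\<lparr>carrier := T\<rparr>) s"
    unfolding irredundant_def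
  proof (intro conjI ballI)
    show "s \<subseteq> carrier (G\<lparr>carrier := T\<rparr>)" using sT' by simp
  next
    fix h assume h: "h \<in> s"
    then obtain M where M: "M \<in> R" "h = f M" unfolding s_def by auto
    have MM: "M \<in> \<M>" using M RM by auto
    have sub: "s - {h} \<subseteq> W M"
    proof
      fix y assume y: "y \<in> s - {h}"
      then obtain L where L: "L \<in> R" "y = f L" unfolding s_def by auto
      then have "L \<noteq> M" using y M by auto
      then show "y \<in> W M" using key1[OF L(1) M(1)] L by simp
    qed
    have g1: "generate (G\<lparr>carrier := T\<rparr>) (s - {h}) = generate G (s - {h})"
    proof (rule generate_consistent[OF _ sT])
      show "s - {h} \<subseteq> T" using sT' by auto
    qed
    have g2: "generate (G\<lparr>carrier := T\<rparr>) s = generate G s"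
      using generate_consistent[OF sT' sT] .
    have "generate G (s - {h}) \<subseteq> W M" using generate_subgroup_incl[OF sub sW[OF MM]] .
    moreover have "h \<in> generate G s" using h by (rule generate.incl)
    moreover have "h \<notin> W M" using key2[OF M(1)] M(2) by simp
    ultimately show "generate (G\<lparr>carrier := T\<rparr>) (s - {h}) \<noteq> generate (G\<lparr>carrier := T\<rparr>) s"
      using g1 g2 by auto
  qed
  have "card s \<le> i_irr (G\<lparr>carrier := T\<rparr>)" using group.i_irr_ge[OF grpT finT irr] .
  moreover have "card s = card R" unfolding s_def using card_image[OF injf] .
  moreover have "card S \<le> card \<M>" using card_mono[OF fM SM] .
  ultimately show ?thesis using cardR cardS Mc by linarith
qed

end

theorem corollary3p5:
  fixes H :: "('a, 'b) monoid_scheme" and N T :: "'a set"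
  assumes "group H" and "finite (carrier H)"
    and "N \<lhd> H" and "subgroup T H"
    and "N \<inter> T = {\<one>\<^bsub>H\<^esub>}" and "N <#>\<^bsub>H\<^esub> T = carrier H"
    and "\<forall>x\<in>N. \<forall>y\<in>N. x \<otimes>\<^bsub>H\<^esub> y = y \<otimes>\<^bsub>H\<^esub> x"
    and "flat (H\<lparr>carrier := T\<rparr>)"
  shows "MaxDim H = MaxDim_act H T N + MaxDim (H\<lparr>carrier := T\<rparr>)"
proof -
  interpret sdp H N T
    using assms by (simp add: sdp_def sdp_axioms_def)
  have "i_irr (H\<lparr>carrier := T\<rparr>) = m_irr (H\<lparr>carrier := T\<rparr>)"
    using assms(8) unfolding flat_def by simp
  also have "\<dots> \<le> MaxDim (H\<lparr>carrier := T\<rparr>)" using group.m_irr_le_MaxDim[OF grpT finT] .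
  finally have "i_irr (H\<lparr>carrier := T\<rparr>) \<le> MaxDim (H\<lparr>carrier := T\<rparr>)" .
  then show ?thesis using lower upper by linarith
qed

end
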